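(* Consider a $B$-restrained congestion game with $n$ players, $m$ resources and maximum strategy-set size $k=\max_i|\Sigma_i|$, under any of the three smoothed models below, with density bound $\phi$. Then the expected value of the maximum number of better-response steps (maximum over all starting strategy profiles and all sequences of better-responses) until a pure Nash equilibrium is reached is bounded by (i) $O(n^{B+3}k^2m^2\phi)$ for general latencies; (ii) $O(n^{B+d+2}\log(n)(d+1)^3k^2m^2\phi)$ for polynomial latencies of degree at most $d$; (iii) $O((d+1)^{B+2}n^2\log(n)k^2m^2\phi)$ for step-function latencies with at most $d$ break-points per resource.
   Context: A congestion game has players $\mathcal N=[n]$, a finite resource set $\mathcal R$, strategy sets $\Sigma_i\subseteq 2^{\mathcal R}$, and latency functions $\kappa_r:[n]\to\mathbb R_{\ge0}$. For a profile $\sigma=(\sigma_1,\dots,\sigma_n)$ the load is $\ell_r(\sigma)=|\{i:r\in\sigma_i\}|$ and player $i$'s cost is $C_i(\sigma)=\sum_{r\in\sigma_i}\kappa_r(\ell_r(\sigma))$. A pure Nash equilibrium (PNE) is a profile from which no player can strictly lower her cost by unilaterally changing strategy; a better-response step is a unilateral change $\sigma_i\to\sigma_i'$ with $C_i(\sigma_i',\sigma_{-i})<C_i(\sigma)$. The game is $B$-restrained if $|\sigma\,\triangle\,\sigma'|\le B$ for every player $i$ and all $\sigma,\sigma'\in\Sigma_i$. Latency models: general — $\kappa_r(\ell)$ given explicitly for each $\ell\in[n]$; polynomial — $\kappa_r(\ell)=\sum_{j=0}^{d_r}\alpha_{r,j}\ell^j$ with $d_r\le d$ and $\alpha_{r,j}\ge0$;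 step-function — for a fixed set of break-points $\mathcal B_r\subseteq[n]$ with $|\mathcal B_r|\le d$, $\kappa_r(\ell)=\sum_{j\in\mathcal B_r\cap[\ell]}\alpha_{r,j}$. Smoothed models: in the general model the values $\kappa_r(\ell)$, in the polynomial model the coefficients $\alpha_{r,j}$, and in the step-function model the jumps $\alpha_{r,j}$ ($j\in\mathcal B_r$; break-points themselves are fixed and adversarial), are drawn independently from distributions with densities $[0,1]\to[0,\phi]$. *)

theory Defs
  imports "HOL-Probability.Probability"
begin

text \<open>Players are 0,...,n-1; resources are natural numbers (a finite set R);
  a strategy profile is a function sigma :: nat => nat set (only values at i < n matter);
  latencies kappa :: resource => load => real.\<close>

definition load :: "nat \<Rightarrow> (nat \<Rightarrow> nat set) \<Rightarrow> nat \<Rightarrow> nat" where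
  "load n \<sigma> r = card {i. i < n \<and> r \<in> \<sigma> i}"

definition cost :: "nat \<Rightarrow> (nat \<Rightarrow> nat \<Rightarrow> real) \<Rightarrow> (nat \<Rightarrow> nat set) \<Rightarrow> nat \<Rightarrow> real" where
  "cost n \<kappa> \<sigma> i = (\<Sum>r\<in>\<sigma> i. \<kappa> r (load n \<sigma> r))"

definition congestion_game :: "nat \<Rightarrow> nat set \<Rightarrow> (nat \<Rightarrow> nat set set) \<Rightarrow> bool" where
  "congestion_game n R \<Sigma> \<longleftrightarrow> finite R \<and> (\<forall>i<n. \<Sigma> i \<noteq> {} \<and> \<Sigma> i \<subseteq> Pow R)"

definition is_profile :: "nat \<Rightarrow> (nat \<Rightarrow> nat set set) \<Rightarrow> (nat \<Rightarrow> nat set) \<Rightarrow> bool" where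
  "is_profile n \<Sigma> \<sigma> \<longleftrightarrow> (\<forall>i<n. \<sigma> i \<in> \<Sigma> i)"

definition better_response_step ::
  "nat \<Rightarrow> (nat \<Rightarrow> nat set set) \<Rightarrow> (nat \<Rightarrow> nat \<Rightarrow> real) \<Rightarrow> (nat \<Rightarrow> nat set) \<Rightarrow> (nat \<Rightarrow> nat set) \<Rightarrow> bool" where
  "better_response_step n \<Sigma> \<kappa> \<sigma> \<sigma>' \<longleftrightarrow>
     (\<exists>i<n. \<exists>s\<in>\<Sigma> i. \<sigma>' = \<sigma>(i := s) \<and> cost n \<kappa> \<sigma>' i < cost n \<kappa> \<sigma> i)"

definition max_br_steps :: "nat \<Rightarrow> (nat \<Rightarrow> nat set set) \<Rightarrow> (nat \<Rightarrow> nat \<Rightarrow> real) \<Rightarrow> ennreal" where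
  "max_br_steps n \<Sigma> \<kappa> =
     (SUP L \<in> {L. \<exists>p. is_profile n \<Sigma> (p 0) \<and>
                      (\<forall>t<L. better_response_step n \<Sigma> \<kappa> (p t) (p (Suc t)))}. of_nat L)"

definition restrained :: "nat \<Rightarrow> (nat \<Rightarrow> nat set set) \<Rightarrow> nat \<Rightarrow> bool" where
  "restrained n \<Sigma> B \<longleftrightarrow> (\<forall>i<n. \<forall>s\<in>\<Sigma> i. \<forall>s'\<in>\<Sigma> i. card ((s - s') \<union> (s' - s)) \<le> B)"

definition max_strat :: "nat \<Rightarrow> (nat \<Rightarrow> nat set set) \<Rightarrow> nat" where
  "max_strat n \<Sigma> = Max (insert 0 {card (\<Sigma> i) | i. i < n})"

definition smoothing_density :: "real \<Rightarrow> (real \<Rightarrow> real) \<Rightarrow> bool" where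
  "smoothing_density \<phi> f \<longleftrightarrow> f \<in> borel_measurable lborel \<and>
     (\<forall>x. 0 \<le> f x \<and> f x \<le> \<phi>) \<and> (\<forall>x. x \<notin> {0..1} \<longrightarrow> f x = 0) \<and>
     (\<integral>\<^sup>+x. ennreal (f x) \<partial>lborel) = 1"

definition param_space :: "(nat \<times> nat) set \<Rightarrow> (nat \<times> nat \<Rightarrow> real \<Rightarrow> real) \<Rightarrow> (nat \<times> nat \<Rightarrow> real) measure" where
  "param_space I f = PiM I (\<lambda>i. density lborel (\<lambda>x. ennreal (f i x)))"

definition gen_lat :: "(nat \<times> nat \<Rightarrow> real) \<Rightarrow> nat \<Rightarrow> nat \<Rightarrow> real" where
  "gen_lat x r l = x (r, l)"

definition poly_lat :: "(nat \<Rightarrow> nat) \<Rightarrow> (nat \<times> nat \<Rightarrow> real) \<Rightarrow> nat \<Rightarrow> nat \<Rightarrow> real" where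
  "poly_lat dg x r l = (\<Sum>j\<le>dg r. x (r, j) * real l ^ j)"

definition step_lat :: "(nat \<Rightarrow> nat set) \<Rightarrow> (nat \<times> nat \<Rightarrow> real) \<Rightarrow> nat \<Rightarrow> nat \<Rightarrow> real" where
  "step_lat Bp x r l = (\<Sum>j\<in>{j\<in>Bp r. j \<le> l}. x (r, j))"

end

theory Submission
  imports Defs "HOL-Analysis.Harmonic_Numbers"
begin


definition sd :: "nat set \<Rightarrow> nat set \<Rightarrow> nat set" where
  "sd s s' = (s - s') \<union> (s' - s)"
definition imp :: "(nat \<Rightarrow> nat \<Rightarrow> real) \<Rightarrow> nat set \<Rightarrow> nat set \<Rightarrow> (nat \<Rightarrow> nat) \<Rightarrow> real" where
  "imp \<kappa> s s' lam = (\<Sum>r\<in>s - s'. \<kappa> r (lam r)) - (\<Sum>r\<in>s' - s. \<kappa> r (lam r))"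
definition pot :: "nat \<Rightarrow> (nat \<Rightarrow> nat \<Rightarrow> real) \<Rightarrow> nat set \<Rightarrow> (nat \<Rightarrow> nat set) \<Rightarrow> real" where
  "pot n \<kappa> R \<sigma> = (\<Sum>r\<in>R. \<Sum>l\<in>{1..load n \<sigma> r}. \<kappa> r l)"
definition others :: "nat \<Rightarrow> (nat \<Rightarrow> nat set) \<Rightarrow> nat \<Rightarrow> nat \<Rightarrow> nat" where
  "others n \<sigma> i r = load n (\<sigma>(i:={})) r + 1"

lemma load_split:
  assumes "i < n"
  shows "load n \<sigma> r = load n (\<sigma>(i:={})) r + (if r \<in> \<sigma> i then 1 else 0)"
proof -
  have eq: "{j. j < n \<and> r \<in> \<sigma> j} = {j. j < n \<and> r \<in> (\<sigma>(i:={})) j} \<union> (if r \<in> \<sigma> i then {i} else {})"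
    using assms by auto
  have fin: "finite {j. j < n \<and> r \<in> (\<sigma>(i:={})) j}" by auto
  have ni: "i \<notin> {j. j < n \<and> r \<in> (\<sigma>(i:={})) j}" by auto
  show ?thesis unfolding load_def eq using fin ni by (auto simp: card_insert_if)
qed

lemma load_le: "load n \<sigma> r \<le> n"
proof -
  have "{i. i < n \<and> r \<in> \<sigma> i} \<subseteq> {..<n}" by auto
  then show ?thesis unfolding load_def by (metis card_lessThan card_mono finite_lessThan)
qed

lemma load_others_le: assumes "i < n" shows "load n (\<sigma>(i:={})) r + 1 \<le> n"
proof -
  have "{j. j < n \<and> r \<in> (\<sigma>(i:={})) j} \<subseteq> {..<n} - {i}" by auto
  then have "load n (\<sigma>(i:={})) r \<le> card ({..<n} - {i})" unfolding load_def
    by (intro card_mono) auto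
  also have "\<dots> = n - 1" using assms by simp
  finally show ?thesis using assms by simp
qed

lemma sum_diff_split:
  fixes g :: "'b \<Rightarrow> real"
  assumes "finite s" "finite s'"
  shows "sum g s - sum g s' = sum g (s - s') - sum g (s' - s)"
proof -
  have "sum g s = sum g (s \<inter> s') + sum g (s - s')"
    using assms(1) by (rule sum.Int_Diff)
  moreover have "sum g s' = sum g (s' \<inter> s) + sum g (s' - s)"
    using assms(2) by (rule sum.Int_Diff)
  moreover have "s' \<inter> s = s \<inter> s'" by blast
  ultimately show ?thesis by simp
qed

lemma cost_diff:
  assumes "i < n" "finite (\<sigma> i)" "finite s'"
  shows "cost n \<kappa> \<sigma> i - cost n \<kappa> (\<sigma>(i:=s')) i = imp \<kappa> (\<sigma> i) s' (others n \<sigma> i)"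
proof -
  let ?g = "\<lambda>r. \<kappa> r (others n \<sigma> i r)"
  have upd: "(\<sigma>(i:=s'))(i:={}) = \<sigma>(i:={})" by simp
  have c1: "cost n \<kappa> \<sigma> i = sum ?g (\<sigma> i)"
    unfolding cost_def others_def
    by (intro sum.cong refl) (simp add: load_split[OF assms(1), of \<sigma>])
  have c2: "cost n \<kappa> (\<sigma>(i:=s')) i = sum ?g s'"
    unfolding cost_def others_def fun_upd_same
  proof (intro sum.cong refl)
    fix r assume "r \<in> s'"
    have "load n (\<sigma>(i:=s')) r = load n (\<sigma>(i:={})) r + (if r \<in> s' then 1 else 0)"
      using load_split[OF assms(1), of "\<sigma>(i:=s')" r] by simp
    then show "\<kappa> r (load n (\<sigma>(i := s')) r) = \<kappa> r (load n (\<sigma>(i := {})) r + 1)" using \<open>r \<in> s'\<close> by simp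
  qed
  show ?thesis unfolding c1 c2 imp_def using sum_diff_split[OF assms(2,3)] by simp
qed

lemma pot_diff:
  assumes "i < n" "finite R" "\<sigma> i \<subseteq> R" "s' \<subseteq> R"
  shows "pot n \<kappa> R \<sigma> - pot n \<kappa> R (\<sigma>(i:=s')) = imp \<kappa> (\<sigma> i) s' (others n \<sigma> i)"
proof -
  let ?g = "\<lambda>r. \<kappa> r (others n \<sigma> i r)"
  let ?l = "\<lambda>r. load n (\<sigma>(i:={})) r"
  have per: "(\<Sum>l\<in>{1..load n \<sigma> r}. \<kappa> r l) - (\<Sum>l\<in>{1..load n (\<sigma>(i:=s')) r}. \<kappa> r l)
     = (if r \<in> \<sigma> i - s' then ?g r else 0) - (if r \<in> s' - \<sigma> i then ?g r else 0)" for r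
  proof -
    have a: "load n \<sigma> r = ?l r + (if r \<in> \<sigma> i then 1 else 0)" by (rule load_split[OF assms(1)])
    have b: "load n (\<sigma>(i:=s')) r = ?l r + (if r \<in> s' then 1 else 0)"
      using load_split[OF assms(1), of "\<sigma>(i:=s')" r] by simp
    have S: "(\<Sum>l\<in>{1..Suc m}. \<kappa> r l) = (\<Sum>l\<in>{1..m}. \<kappa> r l) + \<kappa> r (Suc m)" for m
      by (simp add: sum.atLeast1_atMost_eq sum.lessThan_Suc)
    show ?thesis
    proof (cases "r \<in> \<sigma> i"; cases "r \<in> s'")
    qed (simp_all only: a b others_def if_True if_False S Diff_iff simp_thms; simp)+
  qed
  have "pot n \<kappa> R \<sigma> - pot n \<kappa> R (\<sigma>(i:=s')) =
     (\<Sum>r\<in>R. (if r \<in> \<sigma> i - s' then ?g r else 0) - (if r \<in> s' - \<sigma> i then ?g r else 0))"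
    unfolding pot_def sum_subtractf[symmetric] per ..
  also have "\<dots> = (\<Sum>r\<in>R. if r \<in> \<sigma> i - s' then ?g r else 0) - (\<Sum>r\<in>R. if r \<in> s' - \<sigma> i then ?g r else 0)"
    by (rule sum_subtractf)
  also have "\<dots> = imp \<kappa> (\<sigma> i) s' (others n \<sigma> i)"
  proof -
    have e1: "R \<inter> {r \<in> \<sigma> i. r \<notin> s'} = \<sigma> i - s'" and e2: "R \<inter> {r \<in> s'. r \<notin> \<sigma> i} = s' - \<sigma> i"
      using assms(3,4) by auto
    show ?thesis unfolding imp_def using assms(2) by (simp add: sum.If_cases e1 e2)
  qed
  finally show ?thesis .
qed



lemma pot_bounds:
  assumes "finite R" "Lm \<ge> 0" "\<forall>r\<in>R. \<forall>l\<in>{1..n}. 0 \<le> \<kappa> r l \<and> \<kappa> r l \<le> Lm"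
  shows "0 \<le> pot n \<kappa> R \<sigma>" "pot n \<kappa> R \<sigma> \<le> real (card R) * real n * Lm"
proof -
  have inner: "0 \<le> (\<Sum>l\<in>{1..load n \<sigma> r}. \<kappa> r l) \<and> (\<Sum>l\<in>{1..load n \<sigma> r}. \<kappa> r l) \<le> real n * Lm"
    if r: "r \<in> R" for r
  proof -
    have ln: "load n \<sigma> r \<le> n" by (rule load_le)
    have b: "0 \<le> \<kappa> r l \<and> \<kappa> r l \<le> Lm" if "l \<in> {1..load n \<sigma> r}" for l
      using assms(3) r that ln by auto
    have "(\<Sum>l\<in>{1..load n \<sigma> r}. \<kappa> r l) \<le> (\<Sum>l\<in>{1..load n \<sigma> r}. Lm)"
      using b by (intro sum_mono) auto
    also have "\<dots> = real (load n \<sigma> r) * Lm" by simp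
    also have "\<dots> \<le> real n * Lm" using ln assms(2) by (intro mult_right_mono) auto
    moreover have "0 \<le> (\<Sum>l\<in>{1..load n \<sigma> r}. \<kappa> r l)" by (rule sum_nonneg) (use b in blast)
    ultimately show ?thesis by simp
  qed
  show "0 \<le> pot n \<kappa> R \<sigma>" unfolding pot_def by (rule sum_nonneg) (use inner in blast)
  have "pot n \<kappa> R \<sigma> \<le> (\<Sum>r\<in>R. real n * Lm)" unfolding pot_def using inner by (intro sum_mono) auto
  then show "pot n \<kappa> R \<sigma> \<le> real (card R) * real n * Lm" by simp
qed

lemma imp_restrict: "imp \<kappa> s s' (restrict lam (sd s s')) = imp \<kappa> s s' lam"
  unfolding imp_def sd_def by (intro arg_cong2[where f="(-)"] sum.cong) auto

lemma det:
  assumes cg: "congestion_game n R \<Sigma>"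
    and Lm: "Lm \<ge> 0"
    and bnd: "\<forall>r\<in>R. \<forall>l\<in>{1..n}. 0 \<le> \<kappa> r l \<and> \<kappa> r l \<le> Lm"
    and p0: "is_profile n \<Sigma> (p 0)"
    and steps: "\<forall>t<L. better_response_step n \<Sigma> \<kappa> (p t) (p (Suc t))"
  shows "L < (n+1) ^ card R"
    and "\<And>t. t \<in> {1..L} \<Longrightarrow> \<exists>i\<in>{..<n}. \<exists>s\<in>\<Sigma> i. \<exists>s'\<in>\<Sigma> i. \<exists>lam\<in>PiE (sd s s') (\<lambda>_. {1..n}).
           0 < imp \<kappa> s s' lam \<and> imp \<kappa> s s' lam \<le> real (card R) * real n * Lm / real t"
proof -
  have finR: "finite R" and SR: "\<And>i. i < n \<Longrightarrow> \<Sigma> i \<subseteq> Pow R"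
    using cg unfolding congestion_game_def by auto
  have prof: "is_profile n \<Sigma> (p t)" if "t \<le> L" for t
    using that
  proof (induction t)
    case 0 then show ?case using p0 by simp
  next
    case (Suc t)
    then have "t < L" by simp
    with steps obtain i s' where i: "i < n" "s' \<in> \<Sigma> i" "p (Suc t) = (p t)(i := s')"
      unfolding better_response_step_def by blast
    with Suc show ?case unfolding is_profile_def by auto
  qed
  define \<Phi> where "\<Phi> t = pot n \<kappa> R (p t)" for t
  define D where "D = real (card R) * real n * Lm"
  have dec: "\<exists>i\<in>{..<n}. \<exists>s'\<in>\<Sigma> i. p t i \<in> \<Sigma> i \<and>
      \<Phi> t - \<Phi> (Suc t) = imp \<kappa> (p t i) s' (others n (p t) i) \<and> 0 < imp \<kappa> (p t i) s' (others n (p t) i)"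
    if t: "t < L" for t
  proof -
    obtain i s' where i: "i < n" "s' \<in> \<Sigma> i" "p (Suc t) = (p t)(i := s')"
      and c: "cost n \<kappa> (p (Suc t)) i < cost n \<kappa> (p t) i"
      using steps t unfolding better_response_step_def by blast
    have pti: "p t i \<in> \<Sigma> i" using prof[of t] t i unfolding is_profile_def by auto
    have sub: "p t i \<subseteq> R" "s' \<subseteq> R" using SR[OF i(1)] pti i(2) by auto
    have fin: "finite (p t i)" "finite s'" using sub finR finite_subset by auto
    have e1: "cost n \<kappa> (p t) i - cost n \<kappa> (p (Suc t)) i = imp \<kappa> (p t i) s' (others n (p t) i)"
      using cost_diff[of i n "p t" s' \<kappa>, OF i(1) fin] i(3) by simp
    have e2: "\<Phi> t - \<Phi> (Suc t) = imp \<kappa> (p t i) s' (others n (p t) i)"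
      unfolding \<Phi>_def using pot_diff[of i n R "p t" s' \<kappa>, OF i(1) finR sub] i(3) by simp
    show ?thesis using i pti e1 e2 c by force
  qed
  have Pb: "0 \<le> \<Phi> t" "\<Phi> t \<le> D" for t
    unfolding \<Phi>_def D_def using pot_bounds[OF finR Lm bnd] by auto
  have strict: "\<Phi> t' < \<Phi> t" if "t < t'" "t' \<le> L" for t t'
    using that
  proof (induction t')
    case 0 then show ?case by simp
  next
    case (Suc t')
    have "\<Phi> (Suc t') < \<Phi> t'" using dec[of t'] Suc.prems by force
    show ?case
    proof (cases "t < t'")
      case True then show ?thesis using Suc.IH Suc.prems \<open>\<Phi> (Suc t') < \<Phi> t'\<close> by simp
    next
      case False then have "t = t'" using Suc.prems by simp
      then show ?thesis using \<open>\<Phi> (Suc t') < \<Phi> t'\<close> by simp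
    qed
  qed
  define lv where "lv t = restrict (\<lambda>r. load n (p t) r) R" for t
  have potlv: "\<Phi> t = (\<Sum>r\<in>R. \<Sum>l\<in>{1..lv t r}. \<kappa> r l)" for t
    unfolding \<Phi>_def pot_def lv_def by (intro sum.cong) auto
  have inj: "inj_on lv {0..L}"
  proof (rule inj_onI)
    fix t t' assume tt: "t \<in> {0..L}" "t' \<in> {0..L}" "lv t = lv t'"
    then have "\<Phi> t = \<Phi> t'" unfolding potlv by simp
    then show "t = t'" using strict[of t t'] strict[of t' t] tt by (cases t t' rule: linorder_cases) auto
  qed
  have img: "lv ` {0..L} \<subseteq> PiE R (\<lambda>_. {0..n})"
    unfolding lv_def using load_le by auto
  have "card (lv ` {0..L}) \<le> card (PiE R (\<lambda>_. {0..n::nat}))"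
    by (rule card_mono[OF _ img]) (simp add: finR finite_PiE)
  also have "\<dots> = (n+1) ^ card R" by (simp add: card_PiE finR)
  finally have "card {0..L} \<le> (n+1) ^ card R" using card_image[OF inj] by simp
  then show "L < (n+1) ^ card R" by simp
  fix t assume t: "t \<in> {1..L}"
  show "\<exists>i\<in>{..<n}. \<exists>s\<in>\<Sigma> i. \<exists>s'\<in>\<Sigma> i. \<exists>lam\<in>PiE (sd s s') (\<lambda>_. {1..n}).
           0 < imp \<kappa> s s' lam \<and> imp \<kappa> s s' lam \<le> real (card R) * real n * Lm / real t"
  proof (rule ccontr)
    assume no: "\<not> ?thesis"
    have big: "\<Phi> u - \<Phi> (Suc u) > D / real t" if u: "u < L" for u
    proof -
      obtain i s' where i: "i \<in> {..<n}" "s' \<in> \<Sigma> i" "p u i \<in> \<Sigma> i"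
        and e: "\<Phi> u - \<Phi> (Suc u) = imp \<kappa> (p u i) s' (others n (p u) i)"
        and pos: "0 < imp \<kappa> (p u i) s' (others n (p u) i)"
        using dec[OF u] by blast
      let ?lam = "restrict (others n (p u) i) (sd (p u i) s')"
      have lam: "?lam \<in> PiE (sd (p u i) s') (\<lambda>_. {1..n})"
        using load_others_le[of i n] i(1) unfolding others_def by auto
      have "\<not> (0 < imp \<kappa> (p u i) s' ?lam \<and> imp \<kappa> (p u i) s' ?lam \<le> D / real t)"
        using no i lam unfolding D_def by blast
      then show ?thesis using e pos by (simp add: imp_restrict)
    qed
    have "(\<Sum>u<L. D / real t) < (\<Sum>u<L. \<Phi> u - \<Phi> (Suc u))"
      using t big by (intro sum_strict_mono) (auto simp: lessThan_empty_iff)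
    also have "(\<Sum>u<L. \<Phi> u - \<Phi> (Suc u)) = \<Phi> 0 - \<Phi> L"
      using sum_lessThan_telescope'[of \<Phi> L] by simp
    also have "\<dots> \<le> D" using Pb[of 0] Pb[of L] by simp
    finally have lt: "real L * (D / real t) < D" by simp
    have "D \<ge> 0" unfolding D_def using Lm by simp
    moreover have "real t \<le> real L" "real t > 0" using t by auto
    ultimately have "D \<le> real L * (D / real t)"
      by (simp add: field_simps mult_left_mono)
    with lt show False by simp
  qed
qed



definition Ev :: "(nat \<times> nat \<Rightarrow> real) measure \<Rightarrow> nat \<Rightarrow> (nat \<Rightarrow> nat set set)
    \<Rightarrow> ((nat \<times> nat \<Rightarrow> real) \<Rightarrow> nat \<Rightarrow> nat \<Rightarrow> real) \<Rightarrow> real \<Rightarrow> (nat \<times> nat \<Rightarrow> real) set" where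
  "Ev M n \<Sigma> lat \<epsilon> = (\<Union>i\<in>{..<n}. \<Union>s\<in>\<Sigma> i. \<Union>s'\<in>\<Sigma> i. \<Union>lam\<in>PiE (sd s s') (\<lambda>_. {1..n}).
      {x\<in>space M. 0 < imp (lat x) s s' lam \<and> imp (lat x) s s' lam \<le> \<epsilon>})"

lemma harm_bound: assumes "T \<ge> 1" shows "(\<Sum>t\<in>{1..T}. 1 / real t) \<le> 1 + ln (real T)"
  using assms
proof (induction T rule: dec_induct)
  case base then show ?case by simp
next
  case (step T)
  have T: "real T \<ge> 1" using step by simp
  have "(\<Sum>t\<in>{1..Suc T}. 1 / real t) = (\<Sum>t\<in>{1..T}. 1 / real t) + 1 / real (Suc T)"
    by simp
  also have "\<dots> \<le> 1 + ln (real T) + 1 / real (Suc T)" using step.IH by simp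
  also have "1 / real (Suc T) \<le> ln (real (Suc T)) - ln (real T)"
  proof -
    have "ln (real T / real (Suc T)) \<le> real T / real (Suc T) - 1"
      using T by (intro ln_le_minus_one) auto
    also have "\<dots> = - (1 / real (Suc T))" by (simp add: field_simps)
    finally show ?thesis using T by (simp add: ln_div)
  qed
  finally show ?case by simp
qed

lemma abstract:
  fixes M :: "(nat \<times> nat \<Rightarrow> real) measure"
  assumes cg: "congestion_game n R \<Sigma>"
    and Lm: "Lm \<ge> 0" and N: "N \<ge> 0" and phi: "\<phi> \<ge> 0"
    and AE: "AE x in M. \<forall>r\<in>R. \<forall>l\<in>{1..n}. 0 \<le> lat x r l \<and> lat x r l \<le> Lm"
    and H: "\<And>\<epsilon>. \<epsilon> \<ge> 0 \<Longrightarrow> Ev M n \<Sigma> lat \<epsilon> \<in> sets M \<and> emeasure M (Ev M n \<Sigma> lat \<epsilon>) \<le> ennreal (N * \<phi> * \<epsilon>)"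
  shows "(\<integral>\<^sup>+x. max_br_steps n \<Sigma> (lat x) \<partial>M)
     \<le> ennreal (N * \<phi> * (real (card R) * real n * Lm) * (1 + ln (real ((n+1) ^ card R))))"
proof -
  define T where "T = (n+1) ^ card R"
  define D where "D = real (card R) * real n * Lm"
  have T1: "T \<ge> 1" unfolding T_def by simp
  have D0: "D \<ge> 0" unfolding D_def using Lm by simp
  define G where "G x = (\<Sum>t\<in>{1..T}. indicator (Ev M n \<Sigma> lat (D / real t)) x :: ennreal)" for x
  have meas: "Ev M n \<Sigma> lat (D / real t) \<in> sets M" for t using H[of "D / real t"] D0 by simp
  have pw: "max_br_steps n \<Sigma> (lat x) \<le> G x"
    if x: "x \<in> space M" and b: "\<forall>r\<in>R. \<forall>l\<in>{1..n}. 0 \<le> lat x r l \<and> lat x r l \<le> Lm" for x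
  proof -
    have "of_nat L \<le> G x" if L: "L \<in> {L. \<exists>p. is_profile n \<Sigma> (p 0) \<and>
                      (\<forall>t<L. better_response_step n \<Sigma> (lat x) (p t) (p (Suc t)))}" for L
    proof -
      from L obtain p where p0: "is_profile n \<Sigma> (p 0)"
        and st: "\<forall>t<L. better_response_step n \<Sigma> (lat x) (p t) (p (Suc t))" by blast
      have LT: "L < T" unfolding T_def by (rule det(1)[OF cg Lm b p0 st])
      have inE: "x \<in> Ev M n \<Sigma> lat (D / real t)" if t: "t \<in> {1..L}" for t
        using det(2)[OF cg Lm b p0 st t] x unfolding Ev_def D_def by blast
      have "of_nat L = (\<Sum>t\<in>{1..L}. indicator (Ev M n \<Sigma> lat (D / real t)) x :: ennreal)"
        using inE by simp
      also have "\<dots> \<le> G x" unfolding G_def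
        using LT by (intro sum_mono2) auto
      finally show ?thesis .
    qed
    then show ?thesis unfolding max_br_steps_def by (intro SUP_least) auto
  qed
  have "(\<integral>\<^sup>+x. max_br_steps n \<Sigma> (lat x) \<partial>M) \<le> (\<integral>\<^sup>+x. G x \<partial>M)"
    using AE by (intro nn_integral_mono_AE) (auto simp: pw)
  also have "(\<integral>\<^sup>+x. G x \<partial>M) = (\<Sum>t\<in>{1..T}. emeasure M (Ev M n \<Sigma> lat (D / real t)))"
    unfolding G_def using meas by (subst nn_integral_sum) auto
  also have "\<dots> \<le> (\<Sum>t\<in>{1..T}. ennreal (N * \<phi> * D * (1 / real t)))"
  proof (intro sum_mono)
    fix t assume "t \<in> {1..T}"
    have "emeasure M (Ev M n \<Sigma> lat (D / real t)) \<le> ennreal (N * \<phi> * (D / real t))"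
      using H[of "D / real t"] D0 by simp
    then show "emeasure M (Ev M n \<Sigma> lat (D / real t)) \<le> ennreal (N * \<phi> * D * (1 / real t))"
      by (simp add: field_simps)
  qed
  also have "\<dots> = ennreal (N * \<phi> * D * (\<Sum>t\<in>{1..T}. 1 / real t))"
    using N phi D0 by (subst sum_ennreal) (auto simp: sum_distrib_left)
  also have "\<dots> \<le> ennreal (N * \<phi> * D * (1 + ln (real T)))"
    using harm_bound[OF T1] N phi D0 by (intro ennreal_leI mult_left_mono) auto
  finally show ?thesis unfolding T_def D_def by simp
qed



lemma density_prob:
  assumes "smoothing_density \<phi> g"
  shows "prob_space (density lborel (\<lambda>x. ennreal (g x)))"
proof (rule prob_spaceI)
  have gm: "g \<in> borel_measurable lborel" using assms unfolding smoothing_density_def by simp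
  show "emeasure (density lborel (\<lambda>x. ennreal (g x))) (space (density lborel (\<lambda>x. ennreal (g x)))) = 1"
    using assms gm unfolding smoothing_density_def by (simp add: emeasure_density)
qed

lemma interval_bound:
  assumes sd: "smoothing_density \<phi> g" and c: "c = 1 \<or> c = -1" and e: "\<epsilon> \<ge> 0"
  shows "(\<integral>\<^sup>+y. indicator {y. 0 < c * y + a \<and> c * y + a \<le> \<epsilon>} y \<partial>density lborel (\<lambda>x. ennreal (g x)))
         \<le> ennreal (\<phi> * \<epsilon>)"
proof -
  have gm: "g \<in> borel_measurable lborel" and gb: "\<And>x. 0 \<le> g x \<and> g x \<le> \<phi>"
    using sd unfolding smoothing_density_def by auto
  have phi: "\<phi> \<ge> 0" using gb[of 0] by simp
  define Iv where "Iv = {y. 0 < c * y + a \<and> c * y + a \<le> \<epsilon>}"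
  have Iv: "Iv \<in> sets lborel \<and> emeasure lborel Iv = ennreal \<epsilon>"
  proof (cases "c = 1")
    case True
    then have "Iv = {-a <.. \<epsilon> - a}" unfolding Iv_def by auto
    then show ?thesis using e by simp
  next
    case False
    then have "c = -1" using c by simp
    then have "Iv = {a - \<epsilon> ..< a}" unfolding Iv_def by auto
    then show ?thesis using e by simp
  qed
  have "(\<integral>\<^sup>+y. indicator Iv y \<partial>density lborel (\<lambda>x. ennreal (g x)))
      = (\<integral>\<^sup>+y. ennreal (g y) * indicator Iv y \<partial>lborel)"
    using gm Iv by (intro nn_integral_density) auto
  also have "\<dots> \<le> (\<integral>\<^sup>+y. ennreal \<phi> * indicator Iv y \<partial>lborel)"
    using gb by (intro nn_integral_mono) (auto simp: indicator_def intro: ennreal_leI)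
  also have "\<dots> = ennreal \<phi> * emeasure lborel Iv"
    using Iv by (simp add: nn_integral_cmult_indicator)
  also have "\<dots> = ennreal (\<phi> * \<epsilon>)" using Iv phi e by (simp add: ennreal_mult)
  finally show ?thesis unfolding Iv_def .
qed

lemma single:
  fixes I :: "(nat \<times> nat) set" and h :: "(nat \<times> nat \<Rightarrow> real) \<Rightarrow> real"
  assumes finI: "finite I" and dens: "\<forall>i\<in>I. smoothing_density \<phi> (f i)" and v: "v \<in> I"
    and c: "c = 1 \<or> c = -1"
    and hm: "h \<in> borel_measurable (param_space I f)"
    and hind: "\<And>x y. h (x(v := y)) = h x"
    and e: "\<epsilon> \<ge> 0"
  shows "{x\<in>space (param_space I f). 0 < c * x v + h x \<and> c * x v + h x \<le> \<epsilon>} \<in> sets (param_space I f)"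
    and "emeasure (param_space I f) {x\<in>space (param_space I f). 0 < c * x v + h x \<and> c * x v + h x \<le> \<epsilon>}
         \<le> ennreal (\<phi> * \<epsilon>)"
proof -
  define M' where "M' i = (if i \<in> I then density lborel (\<lambda>x. ennreal (f i x)) else return lborel 0)" for i
  have pM: "prob_space (M' i)" for i
    unfolding M'_def using dens density_prob by (auto intro: prob_space_return)
  interpret product_prob_space M'
    unfolding product_prob_space_def product_sigma_finite_def product_prob_space_axioms_def
    using pM by (auto intro: prob_space_imp_sigma_finite)
  have PS: "param_space I f = PiM I M'"
    unfolding param_space_def M'_def by (rule PiM_cong) auto
  define J where "J = I - {v}"
  have IJ: "I = insert v J" "v \<notin> J" "finite J" using v finI unfolding J_def by auto
  let ?A = "{x\<in>space (PiM I M'). 0 < c * x v + h x \<and> c * x v + h x \<le> \<epsilon>}"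
  have hm': "h \<in> borel_measurable (PiM I M')" using hm PS by simp
  have xv: "(\<lambda>x. x v) \<in> borel_measurable (PiM I M')"
    using measurable_component_singleton[OF v, of M'] unfolding M'_def using v by simp
  have A: "?A \<in> sets (PiM I M')"
    using hm' xv by measurable
  then show "{x\<in>space (param_space I f). 0 < c * x v + h x \<and> c * x v + h x \<le> \<epsilon>} \<in> sets (param_space I f)"
    using PS by simp
  have "emeasure (PiM I M') ?A = (\<integral>\<^sup>+x. indicator ?A x \<partial>PiM (insert v J) M')"
    using A IJ by simp
  also have "\<dots> = (\<integral>\<^sup>+x. (\<integral>\<^sup>+y. indicator ?A (x(v := y)) \<partial>M' v) \<partial>PiM J M')"
    using A IJ by (intro product_nn_integral_insert) auto
  also have "\<dots> \<le> (\<integral>\<^sup>+x. ennreal (\<phi> * \<epsilon>) \<partial>PiM J M')"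
  proof (intro nn_integral_mono)
    fix x assume x: "x \<in> space (PiM J M')"
    have "indicator ?A (x(v := y)) = indicator {y. 0 < c * y + h x \<and> c * y + h x \<le> \<epsilon>} y" for y
    proof -
      have "x(v := y) \<in> space (PiM I M')"
        using x unfolding space_PiM IJ(1) by (intro PiE_fun_upd) (auto simp: M'_def v)
      then show ?thesis by (simp add: hind indicator_def)
    qed
    note pw = this
    have Mv: "M' v = density lborel (\<lambda>z. ennreal (f v z))" unfolding M'_def using v by simp
    have "(\<integral>\<^sup>+y. indicator ?A (x(v := y)) \<partial>M' v)
       = (\<integral>\<^sup>+y. indicator {y. 0 < c * y + h x \<and> c * y + h x \<le> \<epsilon>} y \<partial>density lborel (\<lambda>z. ennreal (f v z)))"
      unfolding Mv by (rule nn_integral_cong) (rule pw)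
    also have "\<dots> \<le> ennreal (\<phi> * \<epsilon>)"
      using dens v c e by (intro interval_bound) auto
    finally show "(\<integral>\<^sup>+y. indicator ?A (x(v := y)) \<partial>M' v) \<le> ennreal (\<phi> * \<epsilon>)" .
  qed
  also have "\<dots> = ennreal (\<phi> * \<epsilon>)"
  proof -
    interpret J: prob_space "PiM J M'" by (rule prob_space_PiM) (use pM in auto)
    show ?thesis by (simp add: J.emeasure_space_1)
  qed
  finally show "emeasure (param_space I f) {x\<in>space (param_space I f). 0 < c * x v + h x \<and> c * x v + h x \<le> \<epsilon>}
         \<le> ennreal (\<phi> * \<epsilon>)" using PS by simp
qed



lemma UN_bound:
  assumes "finite X" "\<And>x. x \<in> X \<Longrightarrow> B x \<in> sets M \<and> emeasure M (B x) \<le> ennreal b"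
    "b \<ge> 0" "card X \<le> K"
  shows "(\<Union>x\<in>X. B x) \<in> sets M \<and> emeasure M (\<Union>x\<in>X. B x) \<le> ennreal (real K * b)"
proof
  show "(\<Union>x\<in>X. B x) \<in> sets M" using assms by auto
  have "emeasure M (\<Union>x\<in>X. B x) \<le> (\<Sum>x\<in>X. emeasure M (B x))"
    using assms by (intro emeasure_subadditive_finite) auto
  also have "\<dots> \<le> (\<Sum>x\<in>X. ennreal b)" using assms by (intro sum_mono) auto
  also have "\<dots> = ennreal (real (card X) * b)" using assms by (simp add: ennreal_of_nat_eq_real_of_nat ennreal_mult)
  also have "\<dots> \<le> ennreal (real K * b)" using assms by (intro ennreal_leI mult_right_mono) auto
  finally show "emeasure M (\<Union>x\<in>X. B x) \<le> ennreal (real K * b)" .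
qed

lemma union_bound:
  assumes S: "\<And>i. i < n \<Longrightarrow> finite (\<Sigma> i) \<and> card (\<Sigma> i) \<le> k"
    and SD: "\<And>i s s'. i < n \<Longrightarrow> s \<in> \<Sigma> i \<Longrightarrow> s' \<in> \<Sigma> i \<Longrightarrow> finite (sd s s') \<and> card (sd s s') \<le> B"
    and V: "finite V" "V \<noteq> {}"
    and A: "\<And>i s s' c. i < n \<Longrightarrow> s \<in> \<Sigma> i \<Longrightarrow> s' \<in> \<Sigma> i \<Longrightarrow> c \<in> PiE (sd s s') (\<lambda>_. V)
            \<Longrightarrow> A i s s' c \<in> sets M \<and> emeasure M (A i s s' c) \<le> ennreal b"
    and b: "b \<ge> 0"
  shows "(\<Union>i\<in>{..<n}. \<Union>s\<in>\<Sigma> i. \<Union>s'\<in>\<Sigma> i. \<Union>c\<in>PiE (sd s s') (\<lambda>_. V). A i s s' c) \<in> sets M \<and>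
         emeasure M (\<Union>i\<in>{..<n}. \<Union>s\<in>\<Sigma> i. \<Union>s'\<in>\<Sigma> i. \<Union>c\<in>PiE (sd s s') (\<lambda>_. V). A i s s' c)
           \<le> ennreal (real n * (real k * (real k * (real (card V) ^ B * b))))"
proof -
  have cV: "card V \<ge> 1" using V by (simp add: Suc_leI card_gt_0_iff)
  have l4: "(\<Union>c\<in>PiE (sd s s') (\<lambda>_. V). A i s s' c) \<in> sets M \<and>
      emeasure M (\<Union>c\<in>PiE (sd s s') (\<lambda>_. V). A i s s' c) \<le> ennreal (real (card V ^ B) * b)"
    if i: "i < n" "s \<in> \<Sigma> i" "s' \<in> \<Sigma> i" for i s s'
  proof (rule UN_bound)
    have f: "finite (sd s s')" "card (sd s s') \<le> B" using SD[OF i] by auto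
    show "finite (PiE (sd s s') (\<lambda>_. V))" using f V by (simp add: finite_PiE)
    have "card (PiE (sd s s') (\<lambda>_. V)) = card V ^ card (sd s s')" using f by (simp add: card_PiE)
    also have "\<dots> \<le> card V ^ B" using cV f by (intro power_increasing) auto
    finally show "card (PiE (sd s s') (\<lambda>_. V)) \<le> card V ^ B" .
  qed (use A i b in auto)
  have b4: "real (card V ^ B) * b \<ge> 0" using b by simp
  have l3: "(\<Union>s'\<in>\<Sigma> i. \<Union>c\<in>PiE (sd s s') (\<lambda>_. V). A i s s' c) \<in> sets M \<and>
      emeasure M (\<Union>s'\<in>\<Sigma> i. \<Union>c\<in>PiE (sd s s') (\<lambda>_. V). A i s s' c) \<le> ennreal (real k * (real (card V ^ B) * b))"
    if i: "i < n" "s \<in> \<Sigma> i" for i s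
    by (rule UN_bound) (use S[OF i(1)] l4[OF i] b4 in auto)
  have l2: "(\<Union>s\<in>\<Sigma> i. \<Union>s'\<in>\<Sigma> i. \<Union>c\<in>PiE (sd s s') (\<lambda>_. V). A i s s' c) \<in> sets M \<and>
      emeasure M (\<Union>s\<in>\<Sigma> i. \<Union>s'\<in>\<Sigma> i. \<Union>c\<in>PiE (sd s s') (\<lambda>_. V). A i s s' c) \<le> ennreal (real k * (real k * (real (card V ^ B) * b)))"
    if i: "i < n" for i
    by (rule UN_bound) (use S[OF i(1)] l3[OF i] b4 in auto)
  show ?thesis
    by (rule UN_bound[where K=n, simplified]) (use l2 b4 in auto)
qed

lemma AE_unit:
  assumes finI: "finite I" and dens: "\<forall>i\<in>I. smoothing_density \<phi> (f i)"
  shows "AE x in param_space I f. \<forall>v\<in>I. 0 \<le> x v \<and> x v \<le> 1"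
proof (rule AE_finite_allI[OF finI])
  fix v assume v: "v \<in> I"
  have pM: "\<And>i. i \<in> I \<Longrightarrow> prob_space (density lborel (\<lambda>x. ennreal (f i x)))"
    using dens density_prob by auto
  have gm: "f v \<in> borel_measurable lborel" and gz: "\<And>y. y \<notin> {0..1} \<Longrightarrow> f v y = 0"
    using dens v unfolding smoothing_density_def by auto
  have "AE y in density lborel (\<lambda>x. ennreal (f v x)). 0 \<le> y \<and> y \<le> 1"
  proof -
    have nz: "\<And>y. f v y \<noteq> 0 \<Longrightarrow> 0 \<le> y \<and> y \<le> 1" using gz by (metis atLeastAtMost_iff)
    show ?thesis using gm nz by (subst AE_density) (auto intro!: AE_I2)
  qed
  then show "AE x in param_space I f. 0 \<le> x v \<and> x v \<le> 1"
    unfolding param_space_def using AE_PiM_component[where M="\<lambda>i. density lborel (\<lambda>x. ennreal (f i x))" and P="\<lambda>y. 0 \<le> y \<and> y \<le> 1", OF pM v] by simp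
qed



lemma imp_sd:
  assumes "finite s" "finite s'"
  shows "imp \<kappa> s s' lam = (\<Sum>r\<in>sd s s'. (if r \<in> s then 1 else -1) * \<kappa> r (lam r))"
proof -
  have "(\<Sum>r\<in>sd s s'. (if r \<in> s then 1 else -1) * \<kappa> r (lam r))
      = (\<Sum>r\<in>s - s'. (if r \<in> s then 1 else -1) * \<kappa> r (lam r)) + (\<Sum>r\<in>s' - s. (if r \<in> s then 1 else -1) * \<kappa> r (lam r))"
    unfolding sd_def using assms by (intro sum.union_disjoint) auto
  also have "(\<Sum>r\<in>s - s'. (if r \<in> s then 1 else -1) * \<kappa> r (lam r)) = (\<Sum>r\<in>s - s'. \<kappa> r (lam r))"
    by (intro sum.cong) auto
  also have "(\<Sum>r\<in>s' - s. (if r \<in> s then 1 else -1) * \<kappa> r (lam r)) = (\<Sum>r\<in>s' - s. - \<kappa> r (lam r))"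
    by (intro sum.cong) auto
  also have "\<dots> = - (\<Sum>r\<in>s' - s. \<kappa> r (lam r))" by (rule sum_negf)
  finally show ?thesis unfolding imp_def by simp
qed

lemma imp_pick:
  assumes "finite s" "finite s'" "r0 \<in> sd s s'"
  shows "imp \<kappa> s s' lam = (if r0 \<in> s then 1 else -1) * \<kappa> r0 (lam r0)
           + (\<Sum>r\<in>sd s s' - {r0}. (if r \<in> s then 1 else -1) * \<kappa> r (lam r))"
proof -
  have "finite (sd s s')" using assms unfolding sd_def by auto
  then show ?thesis unfolding imp_sd[OF assms(1,2)] using assms(3) by (rule sum.remove)
qed

lemma comp_meas:
  assumes "w \<in> I"
  shows "(\<lambda>x. x w) \<in> borel_measurable (param_space I f)"
proof -
  have "(\<lambda>x. x w) \<in> measurable (param_space I f) (density lborel (\<lambda>x. ennreal (f w x)))"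
    unfolding param_space_def using measurable_component_singleton[OF assms, of "\<lambda>i. density lborel (\<lambda>x. ennreal (f i x))"] by simp
  then show ?thesis by (simp cong: measurable_cong_sets)
qed

lemma log_factor1:
  assumes "n \<ge> 1" "m \<ge> 1"
  shows "1 + real m * ln (real n + 1) \<le> 2 * real m * real n"
proof -
  have "ln (real n + 1) \<le> real n" using ln_le_minus_one[of "real n + 1"] by simp
  then have "real m * ln (real n + 1) \<le> real m * real n" by (intro mult_left_mono) auto
  moreover have "1 \<le> real m * real n"
  proof -
    have "(1::real) * 1 \<le> real m * real n" using assms by (intro mult_mono) auto
    then show ?thesis by simp
  qed
  ultimately show ?thesis by simp
qed

lemma log_factor2:
  assumes "n \<ge> 2" "m \<ge> 1"
  shows "1 + real m * ln (real n + 1) \<le> 4 * real m * ln (real n)"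
proof -
  have n: "real n \<ge> 2" using assms by simp
  have "ln (real n + 1) \<le> ln (real n ^ 2)"
  proof -
    have "real n + 1 \<le> real n * real n"
    proof -
      have "real n * 2 \<le> real n * real n" using n by (intro mult_left_mono) auto
      then show ?thesis using n by linarith
    qed
    then show ?thesis using n by (simp add: power2_eq_square)
  qed
  also have "\<dots> = 2 * ln (real n)" using n by (simp add: ln_realpow)
  finally have a: "ln (real n + 1) \<le> 2 * ln (real n)" .
  have l2: "ln 2 \<le> ln (real n)" using n by simp
  have "1 \<le> 2 * ln (real n)" using ln2_ge_two_thirds l2 by simp
  also have "\<dots> \<le> 2 * real m * ln (real n)" using assms l2 ln2_ge_two_thirds
    by (intro mult_right_mono) auto
  finally have b: "1 \<le> 2 * real m * ln (real n)" by simp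
  have "real m * ln (real n + 1) \<le> real m * (2 * ln (real n))" using a by (intro mult_left_mono) auto
  with b show ?thesis by simp
qed

lemma strat_facts:
  assumes cg: "congestion_game n R \<Sigma>" and rs: "restrained n \<Sigma> B"
  shows "\<And>i. i < n \<Longrightarrow> finite (\<Sigma> i) \<and> card (\<Sigma> i) \<le> max_strat n \<Sigma>"
    and "\<And>i s s'. i < n \<Longrightarrow> s \<in> \<Sigma> i \<Longrightarrow> s' \<in> \<Sigma> i \<Longrightarrow> finite (sd s s') \<and> card (sd s s') \<le> B"
    and "\<And>i s. i < n \<Longrightarrow> s \<in> \<Sigma> i \<Longrightarrow> s \<subseteq> R \<and> finite s"
proof -
  have finR: "finite R" and SR: "\<And>i. i < n \<Longrightarrow> \<Sigma> i \<subseteq> Pow R" using cg unfolding congestion_game_def by auto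
  show sub: "\<And>i s. i < n \<Longrightarrow> s \<in> \<Sigma> i \<Longrightarrow> s \<subseteq> R \<and> finite s"
  proof -
    fix i s assume "i < n" "s \<in> \<Sigma> i"
    then have "s \<subseteq> R" using SR by blast
    then show "s \<subseteq> R \<and> finite s" using finR by (simp add: finite_subset)
  qed
  fix i assume i: "i < n"
  have fS: "finite (\<Sigma> i)" using SR[OF i] finR by (rule finite_subset[OF _ iffD2[OF finite_Pow_iff]])
  have fin: "finite (insert 0 {card (\<Sigma> i) | i. i < n})"
  proof -
    have "{card (\<Sigma> i) | i. i < n} = (\<lambda>i. card (\<Sigma> i)) ` {..<n}" by auto
    then show ?thesis by simp
  qed
  have "card (\<Sigma> i) \<in> insert 0 {card (\<Sigma> i) | i. i < n}" using i by blast
  then have "card (\<Sigma> i) \<le> max_strat n \<Sigma>" unfolding max_strat_def by (rule Max_ge[OF fin])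
  then show "finite (\<Sigma> i) \<and> card (\<Sigma> i) \<le> max_strat n \<Sigma>" using fS by simp
  fix s s' assume ss: "s \<in> \<Sigma> i" "s' \<in> \<Sigma> i"
  have "card (sd s s') \<le> B" using rs i ss unfolding restrained_def sd_def by blast
  moreover have "finite (sd s s')" using sub[OF i ss(1)] sub[OF i ss(2)] unfolding sd_def by simp
  ultimately show "finite (sd s s') \<and> card (sd s s') \<le> B" by simp
qed



lemma part1:
  assumes cg: "congestion_game n R \<Sigma>" and rs: "restrained n \<Sigma> B"
    and dens: "\<forall>i\<in>R \<times> {1..n}. smoothing_density \<phi> (f i)"
  shows "(\<integral>\<^sup>+x. max_br_steps n \<Sigma> (gen_lat x) \<partial>param_space (R \<times> {1..n}) f)
        \<le> ennreal (2 * real n ^ (B + 3) * real (max_strat n \<Sigma>) ^ 2 * real (card R) ^ 2 * \<phi>)"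
proof -
  define I where "I = R \<times> {1..n}"
  define M where "M = param_space I f"
  define k where "k = max_strat n \<Sigma>"
  define m where "m = card R"
  define \<phi>0 where "\<phi>0 = max \<phi> 0"
  have finR: "finite R" using cg unfolding congestion_game_def by simp
  have finI: "finite I" unfolding I_def using finR by simp
  have dens': "\<forall>i\<in>I. smoothing_density \<phi> (f i)" using dens unfolding I_def by simp
  note SF = strat_facts[OF cg rs]
  define N where "N = real n * (real k * (real k * (real (card {1..n}) ^ B)))"
  have N0: "N \<ge> 0" unfolding N_def by simp
  have H: "Ev M n \<Sigma> gen_lat \<epsilon> \<in> sets M \<and> emeasure M (Ev M n \<Sigma> gen_lat \<epsilon>) \<le> ennreal (N * \<phi>0 * \<epsilon>)"
    if e: "\<epsilon> \<ge> 0" for \<epsilon>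
  proof (cases "n = 0")
    case True
    then have "Ev M n \<Sigma> gen_lat \<epsilon> = {}" unfolding Ev_def by simp
    then show ?thesis by simp
  next
    case False
    have one: "{x\<in>space M. 0 < imp (gen_lat x) s s' c \<and> imp (gen_lat x) s s' c \<le> \<epsilon>} \<in> sets M \<and>
        emeasure M {x\<in>space M. 0 < imp (gen_lat x) s s' c \<and> imp (gen_lat x) s s' c \<le> \<epsilon>} \<le> ennreal (\<phi>0 * \<epsilon>)"
      if i: "i < n" "s \<in> \<Sigma> i" "s' \<in> \<Sigma> i" and c: "c \<in> PiE (sd s s') (\<lambda>_. {1..n})" for i s s' c
    proof (cases "sd s s' = {}")
      case True
      then have "s = s'" unfolding sd_def by blast
      then have z: "imp (gen_lat x) s s' c = 0" for x unfolding imp_def by simp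
      have E: "{x\<in>space M. 0 < imp (gen_lat x) s s' c \<and> imp (gen_lat x) s s' c \<le> \<epsilon>} = {}"
        by (simp add: z)
      show ?thesis unfolding E by simp
    next
      case False
      then obtain r0 where r0: "r0 \<in> sd s s'" by blast
      have fs: "finite s" "finite s'" "s \<subseteq> R" "s' \<subseteq> R" using SF(3)[OF i(1,2)] SF(3)[OF i(1,3)] by auto
      define v where "v = (r0, c r0)"
      define c0 :: real where "c0 = (if r0 \<in> s then 1 else -1)"
      define h where "h x = (\<Sum>r\<in>sd s s' - {r0}. (if r \<in> s then 1 else -1) * x (r, c r))" for x :: "nat \<times> nat \<Rightarrow> real"
      have inI: "(r, c r) \<in> I" if "r \<in> sd s s'" for r
        using that c fs unfolding I_def sd_def by (auto simp: PiE_iff)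
      have v: "v \<in> I" unfolding v_def using inI r0 by simp
      have eq: "imp (gen_lat x) s s' c = c0 * x v + h x" for x
        unfolding imp_pick[OF fs(1,2) r0] c0_def v_def h_def gen_lat_def by simp
      have hm: "h \<in> borel_measurable M"
        unfolding h_def M_def using inI by (intro borel_measurable_sum borel_measurable_times borel_measurable_const comp_meas) auto
      have hind: "h (x(v := y)) = h x" for x y
        unfolding h_def v_def by (intro sum.cong) auto
      have c0: "c0 = 1 \<or> c0 = -1" unfolding c0_def by simp
      note S = single[OF finI dens' v c0 hm[unfolded M_def] hind e]
      have "\<phi> * \<epsilon> \<le> \<phi>0 * \<epsilon>" unfolding \<phi>0_def using e by (intro mult_right_mono) auto
      then show ?thesis using S unfolding eq M_def by (auto intro: order_trans ennreal_leI)
    qed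
    have b: "\<phi>0 * \<epsilon> \<ge> 0" unfolding \<phi>0_def using e by simp
    have V: "finite {1..n}" "{1..n} \<noteq> {}" using False by auto
    note U = union_bound[of n \<Sigma> k B "{1..n}" "\<lambda>i s s' c. {x\<in>space M. 0 < imp (gen_lat x) s s' c \<and> imp (gen_lat x) s s' c \<le> \<epsilon>}" M "\<phi>0 * \<epsilon>",
       OF SF(1)[unfolded k_def[symmetric]] SF(2) V one b]
    show ?thesis using U unfolding Ev_def N_def by (simp add: mult.assoc)
  qed
  have AE: "AE x in M. \<forall>r\<in>R. \<forall>l\<in>{1..n}. 0 \<le> gen_lat x r l \<and> gen_lat x r l \<le> 1"
    using AE_unit[OF finI dens'] unfolding M_def by eventually_elim (auto simp: gen_lat_def I_def)
  have phi0: "\<phi>0 \<ge> 0" unfolding \<phi>0_def by simp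
  have main: "(\<integral>\<^sup>+x. max_br_steps n \<Sigma> (gen_lat x) \<partial>M)
     \<le> ennreal (N * \<phi>0 * (real m * real n * 1) * (1 + ln (real ((n+1) ^ m))))"
    unfolding m_def by (rule abstract[OF cg _ N0 phi0 AE H]) auto
  have fin: "N * \<phi>0 * (real m * real n * 1) * (1 + ln (real ((n+1) ^ m)))
      \<le> 2 * real n ^ (B + 3) * real k ^ 2 * real m ^ 2 * \<phi>"
  proof (cases "n = 0 \<or> m = 0")
    case True then show ?thesis by (auto simp: N_def power_0_left)
  next
    case False
    then have n1: "n \<ge> 1" and m1: "m \<ge> 1" by auto
    obtain r where "r \<in> R" using m1 unfolding m_def by (metis card.empty ex_in_conv not_one_le_zero)
    then have "(r, 1) \<in> I" using n1 unfolding I_def by auto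
    then have "0 \<le> \<phi>" using dens' unfolding smoothing_density_def by (meson order_trans)
    then have p: "\<phi>0 = \<phi>" unfolding \<phi>0_def by simp
    have lnp: "ln (real ((n+1) ^ m)) = real m * ln (real n + 1)"
      by (simp add: ln_realpow add.commute)
    define X where "X = N * \<phi> * (real m * real n)"
    have X0: "X \<ge> 0" unfolding X_def using N0 \<open>0 \<le> \<phi>\<close> by simp
    have "N * \<phi>0 * (real m * real n * 1) * (1 + ln (real ((n+1) ^ m))) = X * (1 + real m * ln (real n + 1))"
      unfolding X_def p lnp by simp
    also have "\<dots> \<le> X * (2 * real m * real n)" using log_factor1[OF n1 m1] X0 by (rule mult_left_mono)
    also have "\<dots> = 2 * real n ^ (B + 3) * real k ^ 2 * real m ^ 2 * \<phi>"
      unfolding X_def N_def by (simp add: power_add power2_eq_square eval_nat_numeral algebra_simps)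
    finally show ?thesis .
  qed
  show ?thesis using main ennreal_leI[OF fin] unfolding M_def I_def k_def m_def by (rule order_trans)
qed



lemma poly_lat_meas:
  assumes "\<And>j. j \<le> dg r \<Longrightarrow> (r, j) \<in> I"
  shows "(\<lambda>x. poly_lat dg x r l) \<in> borel_measurable (param_space I f)"
  unfolding poly_lat_def using assms
  by (intro borel_measurable_sum borel_measurable_times borel_measurable_const comp_meas) auto

lemma poly_lat_bound:
  assumes "\<forall>j\<le>dg r. 0 \<le> x (r, j) \<and> x (r, j) \<le> 1" "dg r \<le> d" "1 \<le> l" "l \<le> n"
  shows "0 \<le> poly_lat dg x r l \<and> poly_lat dg x r l \<le> real (d + 1) * real n ^ d"
proof
  show "0 \<le> poly_lat dg x r l" unfolding poly_lat_def using assms by (intro sum_nonneg) auto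
  have "poly_lat dg x r l \<le> (\<Sum>j\<le>dg r. real n ^ d)" unfolding poly_lat_def
  proof (intro sum_mono)
    fix j assume j: "j \<in> {..dg r}"
    have "x (r, j) * real l ^ j \<le> 1 * real l ^ j" using assms j by (intro mult_right_mono) auto
    also have "\<dots> \<le> real n ^ j" using assms by (simp add: power_mono)
    also have "\<dots> \<le> real n ^ d" using assms j by (intro power_increasing) auto
    finally show "x (r, j) * real l ^ j \<le> real n ^ d" .
  qed
  also have "\<dots> = real (dg r + 1) * real n ^ d" by simp
  also have "\<dots> \<le> real (d + 1) * real n ^ d" using assms by (intro mult_right_mono) auto
  finally show "poly_lat dg x r l \<le> real (d + 1) * real n ^ d" .
qed

lemma part2:
  assumes n2: "2 \<le> n" and cg: "congestion_game n R \<Sigma>" and rs: "restrained n \<Sigma> B"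
    and dgd: "\<forall>r\<in>R. dg r \<le> d"
    and dens: "\<forall>i\<in>{(r, j). r \<in> R \<and> j \<le> dg r}. smoothing_density \<phi> (f i)"
  shows "(\<integral>\<^sup>+x. max_br_steps n \<Sigma> (poly_lat dg x) \<partial>param_space {(r, j). r \<in> R \<and> j \<le> dg r} f)
        \<le> ennreal (4 * real n ^ (B + d + 2) * ln (real n) * real (d + 1) ^ 3
                    * real (max_strat n \<Sigma>) ^ 2 * real (card R) ^ 2 * \<phi>)"
proof -
  define I where "I = {(r, j). r \<in> R \<and> j \<le> dg r}"
  define M where "M = param_space I f"
  define k where "k = max_strat n \<Sigma>"
  define m where "m = card R"
  define \<phi>0 where "\<phi>0 = max \<phi> 0"
  define Lm where "Lm = real (d + 1) * real n ^ d"
  have finR: "finite R" using cg unfolding congestion_game_def by simp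
  have finI: "finite I"
  proof -
    have "I \<subseteq> R \<times> {..d}" unfolding I_def using dgd by auto
    moreover have "finite (R \<times> {..d})" using finR by simp
    ultimately show ?thesis by (rule finite_subset)
  qed
  have dens': "\<forall>i\<in>I. smoothing_density \<phi> (f i)" using dens unfolding I_def by simp
  note SF = strat_facts[OF cg rs]
  define N where "N = real n * (real k * (real k * (real (card {1..n}) ^ B)))"
  have N0: "N \<ge> 0" unfolding N_def by simp
  have H: "Ev M n \<Sigma> (poly_lat dg) \<epsilon> \<in> sets M \<and> emeasure M (Ev M n \<Sigma> (poly_lat dg) \<epsilon>) \<le> ennreal (N * \<phi>0 * \<epsilon>)"
    if e: "\<epsilon> \<ge> 0" for \<epsilon>
  proof -
    have one: "{x\<in>space M. 0 < imp (poly_lat dg x) s s' c \<and> imp (poly_lat dg x) s s' c \<le> \<epsilon>} \<in> sets M \<and>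
        emeasure M {x\<in>space M. 0 < imp (poly_lat dg x) s s' c \<and> imp (poly_lat dg x) s s' c \<le> \<epsilon>} \<le> ennreal (\<phi>0 * \<epsilon>)"
      if i: "i < n" "s \<in> \<Sigma> i" "s' \<in> \<Sigma> i" and c: "c \<in> PiE (sd s s') (\<lambda>_. {1..n})" for i s s' c
    proof (cases "sd s s' = {}")
      case True
      then have "s = s'" unfolding sd_def by blast
      then have z: "imp (poly_lat dg x) s s' c = 0" for x unfolding imp_def by simp
      have E: "{x\<in>space M. 0 < imp (poly_lat dg x) s s' c \<and> imp (poly_lat dg x) s s' c \<le> \<epsilon>} = {}"
        by (simp add: z)
      show ?thesis unfolding E by simp
    next
      case False
      then obtain r0 where r0: "r0 \<in> sd s s'" by blast
      have fs: "finite s" "finite s'" "s \<subseteq> R" "s' \<subseteq> R" using SF(3)[OF i(1,2)] SF(3)[OF i(1,3)] by auto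
      have r0R: "r0 \<in> R" using r0 fs unfolding sd_def by auto
      define v where "v = (r0, 0::nat)"
      define c0 :: real where "c0 = (if r0 \<in> s then 1 else -1)"
      define h where "h x = c0 * (\<Sum>j\<in>{..dg r0} - {0}. x (r0, j) * real (c r0) ^ j)
          + (\<Sum>r\<in>sd s s' - {r0}. (if r \<in> s then 1 else -1) * poly_lat dg x r (c r))" for x :: "nat \<times> nat \<Rightarrow> real"
      have inR: "r \<in> R" if "r \<in> sd s s'" for r using that fs unfolding sd_def by auto
      have v: "v \<in> I" unfolding v_def I_def using r0R by simp
      have pl: "poly_lat dg x r0 l = x (r0, 0) + (\<Sum>j\<in>{..dg r0} - {0}. x (r0, j) * real l ^ j)" for x l
        unfolding poly_lat_def by (subst sum.remove[of _ 0]) auto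
      have eq: "imp (poly_lat dg x) s s' c = c0 * x v + h x" for x
        unfolding imp_pick[OF fs(1,2) r0] c0_def v_def h_def pl by (simp add: algebra_simps)
      have hm: "h \<in> borel_measurable M"
        unfolding h_def M_def using inR r0R
        by (intro borel_measurable_add borel_measurable_sum borel_measurable_times borel_measurable_const
              comp_meas poly_lat_meas) (auto simp: I_def)
      have hind: "h (x(v := y)) = h x" for x y
      proof -
        have a: "(\<Sum>j\<in>{..dg r0} - {0}. (x(v := y)) (r0, j) * real (c r0) ^ j) = (\<Sum>j\<in>{..dg r0} - {0}. x (r0, j) * real (c r0) ^ j)"
          unfolding v_def by (intro sum.cong) auto
        have b: "poly_lat dg (x(v := y)) r l = poly_lat dg x r l" if "r \<noteq> r0" for r l
          unfolding poly_lat_def v_def using that by (intro sum.cong) auto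
        show ?thesis unfolding h_def a using b by (intro arg_cong2[where f="(+)"] refl sum.cong) auto
      qed
      have c0: "c0 = 1 \<or> c0 = -1" unfolding c0_def by simp
      note S = single[OF finI dens' v c0 hm[unfolded M_def] hind e]
      have "\<phi> * \<epsilon> \<le> \<phi>0 * \<epsilon>" unfolding \<phi>0_def using e by (intro mult_right_mono) auto
      then show ?thesis using S unfolding eq M_def by (auto intro: order_trans ennreal_leI)
    qed
    have b: "\<phi>0 * \<epsilon> \<ge> 0" unfolding \<phi>0_def using e by simp
    have V: "finite {1..n}" "{1..n} \<noteq> {}" using n2 by auto
    note U = union_bound[of n \<Sigma> k B "{1..n}" "\<lambda>i s s' c. {x\<in>space M. 0 < imp (poly_lat dg x) s s' c \<and> imp (poly_lat dg x) s s' c \<le> \<epsilon>}" M "\<phi>0 * \<epsilon>",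
       OF SF(1)[unfolded k_def[symmetric]] SF(2) V one b]
    show ?thesis using U unfolding Ev_def N_def by (simp add: mult.assoc)
  qed
  have AE: "AE x in M. \<forall>r\<in>R. \<forall>l\<in>{1..n}. 0 \<le> poly_lat dg x r l \<and> poly_lat dg x r l \<le> Lm"
    using AE_unit[OF finI dens'] unfolding M_def
  proof eventually_elim
    case (elim x)
    show ?case unfolding Lm_def
    proof (intro ballI)
      fix r l assume r: "r \<in> R" and l: "l \<in> {1..n}"
      show "0 \<le> poly_lat dg x r l \<and> poly_lat dg x r l \<le> real (d + 1) * real n ^ d"
        using elim r l dgd by (intro poly_lat_bound) (auto simp: I_def)
    qed
  qed
  have phi0: "\<phi>0 \<ge> 0" unfolding \<phi>0_def by simp
  have Lm0: "Lm \<ge> 0" unfolding Lm_def by simp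
  have main: "(\<integral>\<^sup>+x. max_br_steps n \<Sigma> (poly_lat dg x) \<partial>M)
     \<le> ennreal (N * \<phi>0 * (real m * real n * Lm) * (1 + ln (real ((n+1) ^ m))))"
    unfolding m_def by (rule abstract[OF cg Lm0 N0 phi0 AE H])
  have fin: "N * \<phi>0 * (real m * real n * Lm) * (1 + ln (real ((n+1) ^ m)))
      \<le> 4 * real n ^ (B + d + 2) * ln (real n) * real (d + 1) ^ 3 * real k ^ 2 * real m ^ 2 * \<phi>"
  proof (cases "m = 0")
    case True then show ?thesis by (auto simp: N_def)
  next
    case False
    then have m1: "m \<ge> 1" by auto
    obtain r where "r \<in> R" using m1 unfolding m_def by (metis card.empty ex_in_conv not_one_le_zero)
    then have "(r, 0) \<in> I" unfolding I_def by auto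
    then have "0 \<le> \<phi>" using dens' unfolding smoothing_density_def by (meson order_trans)
    then have p: "\<phi>0 = \<phi>" unfolding \<phi>0_def by simp
    have lnp: "ln (real ((n+1) ^ m)) = real m * ln (real n + 1)"
      by (simp add: ln_realpow add.commute)
    have ln0: "ln (real n) \<ge> 0" using n2 by simp
    define X where "X = N * \<phi> * (real m * real n * Lm)"
    have X0: "X \<ge> 0" unfolding X_def using N0 \<open>0 \<le> \<phi>\<close> Lm0 by simp
    have "N * \<phi>0 * (real m * real n * Lm) * (1 + ln (real ((n+1) ^ m))) = X * (1 + real m * ln (real n + 1))"
      unfolding X_def p lnp by simp
    also have "\<dots> \<le> X * (4 * real m * ln (real n))" using log_factor2[OF n2 m1] X0 by (rule mult_left_mono)
    also have "\<dots> = 4 * real n ^ (B + d + 2) * ln (real n) * real (d + 1) * real k ^ 2 * real m ^ 2 * \<phi>"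
      unfolding X_def N_def Lm_def by (simp add: power_add power2_eq_square eval_nat_numeral algebra_simps)
    also have "\<dots> \<le> 4 * real n ^ (B + d + 2) * ln (real n) * real (d + 1) ^ 3 * real k ^ 2 * real m ^ 2 * \<phi>"
    proof -
      have "real (d + 1) \<le> real (d + 1) ^ 3"
        by (metis of_nat_le_iff of_nat_power Suc_eq_plus1 le_add1 one_le_numeral self_le_power zero_less_Suc le_add2 neq0_conv zero_neq_numeral)
      then show ?thesis using ln0 \<open>0 \<le> \<phi>\<close>
        by (intro mult_right_mono mult_left_mono) auto
    qed
    finally show ?thesis .
  qed
  show ?thesis using main ennreal_leI[OF fin] unfolding M_def I_def k_def m_def by (rule order_trans)
qed



definition pre :: "(nat \<Rightarrow> nat set) \<Rightarrow> nat \<Rightarrow> nat \<Rightarrow> nat set" where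
  "pre Bp r c = {j\<in>Bp r. card {j'\<in>Bp r. j' \<le> j} \<le> c}"

definition stepF :: "(nat \<Rightarrow> nat set) \<Rightarrow> nat set \<Rightarrow> nat set \<Rightarrow> (nat \<Rightarrow> nat) \<Rightarrow> (nat \<times> nat \<Rightarrow> real) \<Rightarrow> real" where
  "stepF Bp s s' c x = (\<Sum>r\<in>sd s s'. (if r \<in> s then 1 else -1) * (\<Sum>j\<in>pre Bp r (c r). x (r, j)))"

lemma pre_eq:
  assumes "finite (Bp r)"
  shows "pre Bp r (card {j\<in>Bp r. j \<le> l}) = {j\<in>Bp r. j \<le> l}"
proof
  show "{j\<in>Bp r. j \<le> l} \<subseteq> pre Bp r (card {j\<in>Bp r. j \<le> l})"
  proof
    fix j assume j: "j \<in> {j\<in>Bp r. j \<le> l}"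
    have "{j'\<in>Bp r. j' \<le> j} \<subseteq> {j\<in>Bp r. j \<le> l}" using j by auto
    then have "card {j'\<in>Bp r. j' \<le> j} \<le> card {j\<in>Bp r. j \<le> l}" using assms by (intro card_mono) auto
    then show "j \<in> pre Bp r (card {j\<in>Bp r. j \<le> l})" using j unfolding pre_def by auto
  qed
  show "pre Bp r (card {j\<in>Bp r. j \<le> l}) \<subseteq> {j\<in>Bp r. j \<le> l}"
  proof
    fix j assume j: "j \<in> pre Bp r (card {j\<in>Bp r. j \<le> l})"
    show "j \<in> {j\<in>Bp r. j \<le> l}"
    proof (rule ccontr)
      assume "j \<notin> {j\<in>Bp r. j \<le> l}"
      then have jl: "l < j" "j \<in> Bp r" using j unfolding pre_def by auto
      have s1: "{j\<in>Bp r. j \<le> l} \<subseteq> {j'\<in>Bp r. j' \<le> j}" using jl by auto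
      have s2: "j \<notin> {j\<in>Bp r. j \<le> l}" "j \<in> {j'\<in>Bp r. j' \<le> j}" using jl by auto
      have "{j\<in>Bp r. j \<le> l} \<subset> {j'\<in>Bp r. j' \<le> j}" using s1 s2 by blast
      then have "card {j\<in>Bp r. j \<le> l} < card {j'\<in>Bp r. j' \<le> j}" using assms by (intro psubset_card_mono) auto
      then show False using j unfolding pre_def by auto
    qed
  qed
qed

lemma part3:
  assumes n2: "2 \<le> n" and cg: "congestion_game n R \<Sigma>" and rs: "restrained n \<Sigma> B"
    and Bpd: "\<forall>r\<in>R. Bp r \<subseteq> {1..n} \<and> card (Bp r) \<le> d"
    and dens: "\<forall>i\<in>{(r, j). r \<in> R \<and> j \<in> Bp r}. smoothing_density \<phi> (f i)"
  shows "(\<integral>\<^sup>+x. max_br_steps n \<Sigma> (step_lat Bp x) \<partial>param_space {(r, j). r \<in> R \<and> j \<in> Bp r} f)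
        \<le> ennreal (4 * real (d + 1) ^ (B + 2) * real n ^ 2 * ln (real n)
                    * real (max_strat n \<Sigma>) ^ 2 * real (card R) ^ 2 * \<phi>)"
proof -
  define I where "I = {(r, j). r \<in> R \<and> j \<in> Bp r}"
  define M where "M = param_space I f"
  define k where "k = max_strat n \<Sigma>"
  define m where "m = card R"
  define \<phi>0 where "\<phi>0 = max \<phi> 0"
  define Lm where "Lm = real d"
  have finR: "finite R" using cg unfolding congestion_game_def by simp
  have finBp: "finite (Bp r)" if "r \<in> R" for r using Bpd that by (meson finite_atLeastAtMost finite_subset)
  have finI: "finite I"
  proof -
    have "I \<subseteq> R \<times> {1..n}" unfolding I_def using Bpd by auto
    moreover have "finite (R \<times> {1..n})" using finR by simp
    ultimately show ?thesis by (rule finite_subset)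
  qed
  have dens': "\<forall>i\<in>I. smoothing_density \<phi> (f i)" using dens unfolding I_def by simp
  note SF = strat_facts[OF cg rs]
  define N where "N = real n * (real k * (real k * (real (card {0..d}) ^ B)))"
  have N0: "N \<ge> 0" unfolding N_def by simp
  have slm: "(\<lambda>x. step_lat Bp x r l) \<in> borel_measurable M" if "r \<in> R" for r l
    unfolding step_lat_def M_def using that
    by (intro borel_measurable_sum comp_meas) (auto simp: I_def)
  have H: "Ev M n \<Sigma> (step_lat Bp) \<epsilon> \<in> sets M \<and> emeasure M (Ev M n \<Sigma> (step_lat Bp) \<epsilon>) \<le> ennreal (N * \<phi>0 * \<epsilon>)"
    if e: "\<epsilon> \<ge> 0" for \<epsilon>
  proof -
    have one: "{x\<in>space M. 0 < stepF Bp s s' c x \<and> stepF Bp s s' c x \<le> \<epsilon>} \<in> sets M \<and>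
        emeasure M {x\<in>space M. 0 < stepF Bp s s' c x \<and> stepF Bp s s' c x \<le> \<epsilon>} \<le> ennreal (\<phi>0 * \<epsilon>)"
      if i: "i < n" "s \<in> \<Sigma> i" "s' \<in> \<Sigma> i" and c: "c \<in> PiE (sd s s') (\<lambda>_. {0..d})" for i s s' c
    proof (cases "\<exists>r0\<in>sd s s'. pre Bp r0 (c r0) \<noteq> {}")
      case False
      then have z: "stepF Bp s s' c x = 0" for x unfolding stepF_def by simp
      have E: "{x\<in>space M. 0 < stepF Bp s s' c x \<and> stepF Bp s s' c x \<le> \<epsilon>} = {}"
        by (simp add: z)
      show ?thesis unfolding E by simp
    next
      case True
      then obtain r0 j0 where r0: "r0 \<in> sd s s'" and j0: "j0 \<in> pre Bp r0 (c r0)" by blast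
      have fs: "finite s" "finite s'" "s \<subseteq> R" "s' \<subseteq> R" using SF(3)[OF i(1,2)] SF(3)[OF i(1,3)] by auto
      have inR: "r \<in> R" if "r \<in> sd s s'" for r using that fs unfolding sd_def by auto
      have r0R: "r0 \<in> R" using inR r0 by simp
      have finsd: "finite (sd s s')" using fs unfolding sd_def by simp
      have finpre: "finite (pre Bp r (c r))" if "r \<in> R" for r using finBp[OF that] unfolding pre_def by simp
      define v where "v = (r0, j0)"
      define c0 :: real where "c0 = (if r0 \<in> s then 1 else -1)"
      define h where "h x = c0 * (\<Sum>j\<in>pre Bp r0 (c r0) - {j0}. x (r0, j))
          + (\<Sum>r\<in>sd s s' - {r0}. (if r \<in> s then 1 else -1) * (\<Sum>j\<in>pre Bp r (c r). x (r, j)))" for x :: "nat \<times> nat \<Rightarrow> real"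
      have v: "v \<in> I" unfolding v_def I_def using r0R j0 unfolding pre_def by simp
      have eq: "stepF Bp s s' c x = c0 * x v + h x" for x
      proof -
        have "stepF Bp s s' c x = c0 * (\<Sum>j\<in>pre Bp r0 (c r0). x (r0, j))
           + (\<Sum>r\<in>sd s s' - {r0}. (if r \<in> s then 1 else -1) * (\<Sum>j\<in>pre Bp r (c r). x (r, j)))"
          unfolding stepF_def c0_def using finsd r0 by (rule sum.remove)
        also have "(\<Sum>j\<in>pre Bp r0 (c r0). x (r0, j)) = x (r0, j0) + (\<Sum>j\<in>pre Bp r0 (c r0) - {j0}. x (r0, j))"
          using finpre[OF r0R] j0 by (rule sum.remove)
        finally show ?thesis unfolding h_def v_def by (simp add: algebra_simps)
      qed
      have hm: "h \<in> borel_measurable M"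
        unfolding h_def M_def using inR r0R
        by (intro borel_measurable_add borel_measurable_sum borel_measurable_times borel_measurable_const
              comp_meas) (auto simp: I_def pre_def)
      have hind: "h (x(v := y)) = h x" for x y
      proof -
        have a: "(\<Sum>j\<in>pre Bp r0 (c r0) - {j0}. (x(v := y)) (r0, j)) = (\<Sum>j\<in>pre Bp r0 (c r0) - {j0}. x (r0, j))"
          unfolding v_def by (intro sum.cong) auto
        have b: "(\<Sum>j\<in>pre Bp r (c r). (x(v := y)) (r, j)) = (\<Sum>j\<in>pre Bp r (c r). x (r, j))" if "r \<noteq> r0" for r
          unfolding v_def using that by (intro sum.cong) auto
        show ?thesis unfolding h_def a using b by (intro arg_cong2[where f="(+)"] refl sum.cong) auto
      qed
      have c0: "c0 = 1 \<or> c0 = -1" unfolding c0_def by simp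
      note S = single[OF finI dens' v c0 hm[unfolded M_def] hind e]
      have "\<phi> * \<epsilon> \<le> \<phi>0 * \<epsilon>" unfolding \<phi>0_def using e by (intro mult_right_mono) auto
      then show ?thesis using S unfolding eq M_def by (auto intro: order_trans ennreal_leI)
    qed
    have b: "\<phi>0 * \<epsilon> \<ge> 0" unfolding \<phi>0_def using e by simp
    have V: "finite {0..d}" "{0..d} \<noteq> {}" by auto
    note U = union_bound[of n \<Sigma> k B "{0..d}" "\<lambda>i s s' c. {x\<in>space M. 0 < stepF Bp s s' c x \<and> stepF Bp s s' c x \<le> \<epsilon>}" M "\<phi>0 * \<epsilon>",
       OF SF(1)[unfolded k_def[symmetric]] SF(2) V one b]
    let ?U = "\<Union>i\<in>{..<n}. \<Union>s\<in>\<Sigma> i. \<Union>s'\<in>\<Sigma> i. \<Union>c\<in>PiE (sd s s') (\<lambda>_. {0..d}). {x\<in>space M. 0 < stepF Bp s s' c x \<and> stepF Bp s s' c x \<le> \<epsilon>}"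
    have sub: "Ev M n \<Sigma> (step_lat Bp) \<epsilon> \<subseteq> ?U"
    proof
      fix x assume "x \<in> Ev M n \<Sigma> (step_lat Bp) \<epsilon>"
      then obtain i s s' lam where i: "i < n" "s \<in> \<Sigma> i" "s' \<in> \<Sigma> i" and lam: "lam \<in> PiE (sd s s') (\<lambda>_. {1..n})"
        and x: "x \<in> space M" "0 < imp (step_lat Bp x) s s' lam" "imp (step_lat Bp x) s s' lam \<le> \<epsilon>"
        unfolding Ev_def by blast
      have fs: "finite s" "finite s'" "s \<subseteq> R" "s' \<subseteq> R" using SF(3)[OF i(1,2)] SF(3)[OF i(1,3)] by auto
      have inR: "r \<in> R" if "r \<in> sd s s'" for r using that fs unfolding sd_def by auto
      define c where "c = restrict (\<lambda>r. card {j\<in>Bp r. j \<le> lam r}) (sd s s')"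
      have c: "c \<in> PiE (sd s s') (\<lambda>_. {0..d})"
      proof -
        have "card {j\<in>Bp r. j \<le> lam r} \<le> d" if "r \<in> sd s s'" for r
        proof -
          have "card {j\<in>Bp r. j \<le> lam r} \<le> card (Bp r)" using finBp[OF inR[OF that]] by (intro card_mono) auto
          moreover have "card (Bp r) \<le> d" using Bpd inR[OF that] by blast
          ultimately show ?thesis by linarith
        qed
        then show ?thesis unfolding c_def by auto
      qed
      have "imp (step_lat Bp x) s s' lam = stepF Bp s s' c x"
        unfolding imp_sd[OF fs(1,2)] stepF_def
      proof (intro sum.cong refl)
        fix r assume r: "r \<in> sd s s'"
        have "pre Bp r (c r) = {j\<in>Bp r. j \<le> lam r}" unfolding c_def using r pre_eq[of Bp r, OF finBp[OF inR[OF r]]] by simp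
        then show "(if r \<in> s then 1 else -1) * step_lat Bp x r (lam r) = (if r \<in> s then 1 else -1) * (\<Sum>j\<in>pre Bp r (c r). x (r, j))"
          unfolding step_lat_def by simp
      qed
      then have mem: "x \<in> {x\<in>space M. 0 < stepF Bp s s' c x \<and> stepF Bp s s' c x \<le> \<epsilon>}" using x by simp
      show "x \<in> ?U"
        apply (rule UN_I[where a=i], simp add: i(1))
        apply (rule UN_I[where a=s], rule i(2))
        apply (rule UN_I[where a=s'], rule i(3))
        apply (rule UN_I[where a=c], rule c)
        by (rule mem)
    qed
    have piece: "{x \<in> space M. 0 < imp (step_lat Bp x) s s' lam \<and> imp (step_lat Bp x) s s' lam \<le> \<epsilon>} \<in> sets M"
      if i: "i < n" "s \<in> \<Sigma> i" "s' \<in> \<Sigma> i" for i s s' lam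
    proof -
      have fs: "s \<subseteq> R" "s' \<subseteq> R" using SF(3)[of i s] SF(3)[of i s'] i by auto
      have "(\<lambda>x. imp (step_lat Bp x) s s' lam) \<in> borel_measurable M"
        unfolding imp_def using fs by (intro borel_measurable_diff borel_measurable_sum slm) auto
      then show ?thesis by measurable
    qed
    have Evm: "Ev M n \<Sigma> (step_lat Bp) \<epsilon> \<in> sets M"
      unfolding Ev_def
      apply (rule sets.finite_UN, simp)
      apply (rule sets.finite_UN, use SF(1) in simp)
      apply (rule sets.finite_UN, use SF(1) in simp)
      apply (rule sets.finite_UN, use SF(2) in \<open>simp add: finite_PiE\<close>)
      apply (rule piece)
      by auto
    have "emeasure M (Ev M n \<Sigma> (step_lat Bp) \<epsilon>) \<le> emeasure M ?U"
      using U sub by (intro emeasure_mono) auto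
    then show ?thesis using U Evm unfolding N_def by (auto simp: mult.assoc intro: order_trans)
  qed
  have AE: "AE x in M. \<forall>r\<in>R. \<forall>l\<in>{1..n}. 0 \<le> step_lat Bp x r l \<and> step_lat Bp x r l \<le> Lm"
    using AE_unit[OF finI dens'] unfolding M_def
  proof eventually_elim
    case (elim x)
    show ?case unfolding Lm_def
    proof (intro ballI conjI)
      fix r l assume r: "r \<in> R" and l: "l \<in> {1..n}"
      have b: "0 \<le> x (r, j) \<and> x (r, j) \<le> 1" if "j \<in> Bp r" for j using elim r that unfolding I_def by auto
      show "0 \<le> step_lat Bp x r l" unfolding step_lat_def using b by (intro sum_nonneg) auto
      have "step_lat Bp x r l \<le> (\<Sum>j\<in>{j\<in>Bp r. j \<le> l}. 1)" unfolding step_lat_def using b by (intro sum_mono) auto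
      also have "\<dots> = real (card {j\<in>Bp r. j \<le> l})" by simp
      also have "\<dots> \<le> real (card (Bp r))" using finBp[OF r] by (intro of_nat_mono card_mono) auto
      also have "\<dots> \<le> real d" using Bpd r by simp
      finally show "step_lat Bp x r l \<le> real d" .
    qed
  qed
  have phi0: "\<phi>0 \<ge> 0" unfolding \<phi>0_def by simp
  have Lm0: "Lm \<ge> 0" unfolding Lm_def by simp
  have main: "(\<integral>\<^sup>+x. max_br_steps n \<Sigma> (step_lat Bp x) \<partial>M)
     \<le> ennreal (N * \<phi>0 * (real m * real n * Lm) * (1 + ln (real ((n+1) ^ m))))"
    unfolding m_def by (rule abstract[OF cg Lm0 N0 phi0 AE H])
  have fin: "N * \<phi>0 * (real m * real n * Lm) * (1 + ln (real ((n+1) ^ m)))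
      \<le> 4 * real (d + 1) ^ (B + 2) * real n ^ 2 * ln (real n) * real k ^ 2 * real m ^ 2 * \<phi>"
    if phi: "\<phi> \<ge> 0"
  proof (cases "m = 0 \<or> d = 0")
    case True
    have "ln (real n) \<ge> 0" using n2 by simp
    then show ?thesis using True phi by (auto simp: N_def Lm_def)
  next
    case False
    then have m1: "m \<ge> 1" and d1: "d \<ge> 1" by auto
    obtain r where r: "r \<in> R" using m1 unfolding m_def by (metis card.empty ex_in_conv not_one_le_zero)
    note phi
    then have p: "\<phi>0 = \<phi>" unfolding \<phi>0_def by simp
    have lnp: "ln (real ((n+1) ^ m)) = real m * ln (real n + 1)"
      by (simp add: ln_realpow add.commute)
    have ln0: "ln (real n) \<ge> 0" using n2 by simp
    define X where "X = N * \<phi> * (real m * real n * Lm)"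
    have X0: "X \<ge> 0" unfolding X_def using N0 \<open>0 \<le> \<phi>\<close> Lm0 by simp
    have "N * \<phi>0 * (real m * real n * Lm) * (1 + ln (real ((n+1) ^ m))) = X * (1 + real m * ln (real n + 1))"
      unfolding X_def p lnp by simp
    also have "\<dots> \<le> X * (4 * real m * ln (real n))" using log_factor2[OF n2 m1] X0 by (rule mult_left_mono)
    also have "\<dots> = 4 * (real (d + 1) ^ B * real d) * real n ^ 2 * ln (real n) * real k ^ 2 * real m ^ 2 * \<phi>"
      unfolding X_def N_def Lm_def by (simp add: power2_eq_square algebra_simps)
    also have "\<dots> \<le> 4 * real (d + 1) ^ (B + 2) * real n ^ 2 * ln (real n) * real k ^ 2 * real m ^ 2 * \<phi>"
    proof -
      have "real (d + 1) ^ B * real d \<le> real (d + 1) ^ B * real (d + 1) ^ 2"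
      proof (intro mult_left_mono)
        have "real d * 1 \<le> (1 + real d) * (1 + real d)" by (intro mult_mono) auto
        then show "real d \<le> real (d + 1) ^ 2" by (simp add: power2_eq_square)
      qed simp
      then have "real (d + 1) ^ B * real d \<le> real (d + 1) ^ (B + 2)" unfolding power_add .
      then show ?thesis using ln0 \<open>0 \<le> \<phi>\<close>
        by (intro mult_right_mono mult_left_mono) auto
    qed
    finally show ?thesis .
  qed
  show ?thesis
  proof (cases "\<phi> \<ge> 0")
    case True
    show ?thesis using main ennreal_leI[OF fin[OF True]] unfolding M_def I_def k_def m_def by (rule order_trans)
  next
    case False
    then have "\<phi>0 = 0" unfolding \<phi>0_def by simp
    then show ?thesis using main unfolding M_def I_def k_def m_def by simp
  qed
qed

theorem theorem4p2:
  shows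
  "(\<exists>C::real. \<forall>n R \<Sigma> B \<phi> f.
      congestion_game n R \<Sigma> \<and> restrained n \<Sigma> B \<and>
      (\<forall>i\<in>R \<times> {1..n}. smoothing_density \<phi> (f i)) \<longrightarrow>
      (\<integral>\<^sup>+x. max_br_steps n \<Sigma> (gen_lat x) \<partial>param_space (R \<times> {1..n}) f)
        \<le> ennreal (C * real n ^ (B + 3) * real (max_strat n \<Sigma>) ^ 2 * real (card R) ^ 2 * \<phi>))
 \<and> (\<exists>C::real. \<forall>n R \<Sigma> B \<phi> f d dg.
      2 \<le> n \<and> congestion_game n R \<Sigma> \<and> restrained n \<Sigma> B \<and> (\<forall>r\<in>R. dg r \<le> d) \<and>
      (\<forall>i\<in>{(r, j). r \<in> R \<and> j \<le> dg r}. smoothing_density \<phi> (f i)) \<longrightarrow>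
      (\<integral>\<^sup>+x. max_br_steps n \<Sigma> (poly_lat dg x) \<partial>param_space {(r, j). r \<in> R \<and> j \<le> dg r} f)
        \<le> ennreal (C * real n ^ (B + d + 2) * ln (real n) * real (d + 1) ^ 3
                    * real (max_strat n \<Sigma>) ^ 2 * real (card R) ^ 2 * \<phi>))
 \<and> (\<exists>C::real. \<forall>n R \<Sigma> B \<phi> f d Bp.
      2 \<le> n \<and> congestion_game n R \<Sigma> \<and> restrained n \<Sigma> B \<and>
      (\<forall>r\<in>R. Bp r \<subseteq> {1..n} \<and> card (Bp r) \<le> d) \<and>
      (\<forall>i\<in>{(r, j). r \<in> R \<and> j \<in> Bp r}. smoothing_density \<phi> (f i)) \<longrightarrow>
      (\<integral>\<^sup>+x. max_br_steps n \<Sigma> (step_lat Bp x) \<partial>param_space {(r, j). r \<in> R \<and> j \<in> Bp r} f)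
        \<le> ennreal (C * real (d + 1) ^ (B + 2) * real n ^ 2 * ln (real n)
                    * real (max_strat n \<Sigma>) ^ 2 * real (card R) ^ 2 * \<phi>))"
proof (intro conjI)
  show "\<exists>C::real. \<forall>n R \<Sigma> B \<phi> f.
      congestion_game n R \<Sigma> \<and> restrained n \<Sigma> B \<and>
      (\<forall>i\<in>R \<times> {1..n}. smoothing_density \<phi> (f i)) \<longrightarrow>
      (\<integral>\<^sup>+x. max_br_steps n \<Sigma> (gen_lat x) \<partial>param_space (R \<times> {1..n}) f)
        \<le> ennreal (C * real n ^ (B + 3) * real (max_strat n \<Sigma>) ^ 2 * real (card R) ^ 2 * \<phi>)"
    by (intro exI[of _ 2] allI impI) (use part1 in blast)
  show "\<exists>C::real. \<forall>n R \<Sigma> B \<phi> f d dg.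
      2 \<le> n \<and> congestion_game n R \<Sigma> \<and> restrained n \<Sigma> B \<and> (\<forall>r\<in>R. dg r \<le> d) \<and>
      (\<forall>i\<in>{(r, j). r \<in> R \<and> j \<le> dg r}. smoothing_density \<phi> (f i)) \<longrightarrow>
      (\<integral>\<^sup>+x. max_br_steps n \<Sigma> (poly_lat dg x) \<partial>param_space {(r, j). r \<in> R \<and> j \<le> dg r} f)
        \<le> ennreal (C * real n ^ (B + d + 2) * ln (real n) * real (d + 1) ^ 3
                    * real (max_strat n \<Sigma>) ^ 2 * real (card R) ^ 2 * \<phi>)"
    by (intro exI[of _ 4] allI impI) (use part2 in blast)
  show "\<exists>C::real. \<forall>n R \<Sigma> B \<phi> f d Bp.
      2 \<le> n \<and> congestion_game n R \<Sigma> \<and> restrained n \<Sigma> B \<and>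
      (\<forall>r\<in>R. Bp r \<subseteq> {1..n} \<and> card (Bp r) \<le> d) \<and>
      (\<forall>i\<in>{(r, j). r \<in> R \<and> j \<in> Bp r}. smoothing_density \<phi> (f i)) \<longrightarrow>
      (\<integral>\<^sup>+x. max_br_steps n \<Sigma> (step_lat Bp x) \<partial>param_space {(r, j). r \<in> R \<and> j \<in> Bp r} f)
        \<le> ennreal (C * real (d + 1) ^ (B + 2) * real n ^ 2 * ln (real n)
                    * real (max_strat n \<Sigma>) ^ 2 * real (card R) ^ 2 * \<phi>)"
    by (intro exI[of _ 4] allI impI) (use part3 in blast)
qed

end
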